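(* Let $d\ge1$ and $s\in(-\tfrac12,\infty)$. Define $S_s:\mathbb{R}^{d\times d}\to\mathbb{R}^{d\times d}$ by $S_s(\mathbf A):=\mathbf U\mathbf H^{2s+1}\mathbf V^T$, where $\mathbf A=\mathbf U\mathbf H\mathbf V^T$ is a singular value decomposition ($\mathbf U,\mathbf V$ orthogonal, $\mathbf H$ diagonal with the nonnegative singular values $\sigma_1,\dots,\sigma_d$ of $\mathbf A$, and $\mathbf H^{2s+1}=\operatorname{diag}(\sigma_j^{2s+1})$); equivalently $S_s(\mathbf A)=(\mathbf A\mathbf A^T)^s\mathbf A$ whenever the latter is defined. Then for all $\mathbf A,\mathbf C\in\mathbb{R}^{d\times d}$, \[ (S_s(\mathbf A)-S_s(\mathbf C)):(\mathbf A-\mathbf C)\ge0. \]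
   Context: ":" denotes the Frobenius inner product $\mathbf X:\mathbf Y=\sum_{i,j}X_{ij}Y_{ij}$. $S_s(\mathbf A)$ does not depend on the choice of singular value decomposition. *)

theory Defs
  imports "HOL-Analysis.Analysis"
begin

definition diag_mat :: "real ^ 'n \<Rightarrow> real ^ 'n ^ 'n" where
  "diag_mat \<sigma> = (\<chi> i j. if i = j then \<sigma> $ i else 0)"

definition is_svd :: "real ^ 'n ^ 'n \<Rightarrow> real ^ 'n ^ 'n \<Rightarrow> real ^ 'n \<Rightarrow> real ^ 'n ^ 'n \<Rightarrow> bool" where
  "is_svd A U \<sigma> V \<longleftrightarrow> orthogonal_matrix U \<and> orthogonal_matrix V \<and>
     (\<forall>i. \<sigma> $ i \<ge> 0) \<and> A = U ** diag_mat \<sigma> ** transpose V"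

definition S_map :: "real \<Rightarrow> real ^ 'n ^ 'n \<Rightarrow> real ^ 'n ^ 'n" where
  "S_map s A = (SOME B. \<exists>U \<sigma> V. is_svd A U \<sigma> V \<and>
      B = U ** diag_mat (\<chi> i. (\<sigma> $ i) powr (2 * s + 1)) ** transpose V)"

definition frob :: "real ^ 'n ^ 'n \<Rightarrow> real ^ 'n ^ 'n \<Rightarrow> real" where
  "frob X Y = (\<Sum>i\<in>UNIV. \<Sum>j\<in>UNIV. X $ i $ j * Y $ i $ j)"

end

theory Submission
  imports Defs
begin


lemma swap4: "(\<Sum>r\<in>A. \<Sum>c\<in>B. \<Sum>i\<in>C. \<Sum>j\<in>D. f r c i j) = (\<Sum>i\<in>C. \<Sum>j\<in>D. \<Sum>r\<in>A. \<Sum>c\<in>B. (f r c i j::'a::comm_monoid_add))"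
proof -
  have "(\<Sum>r\<in>A. \<Sum>c\<in>B. \<Sum>i\<in>C. \<Sum>j\<in>D. f r c i j) = (\<Sum>r\<in>A. \<Sum>i\<in>C. \<Sum>c\<in>B. \<Sum>j\<in>D. f r c i j)"
    by (rule sum.cong[OF refl], rule sum.swap)
  also have "\<dots> = (\<Sum>i\<in>C. \<Sum>r\<in>A. \<Sum>c\<in>B. \<Sum>j\<in>D. f r c i j)" by (rule sum.swap)
  also have "\<dots> = (\<Sum>i\<in>C. \<Sum>r\<in>A. \<Sum>j\<in>D. \<Sum>c\<in>B. f r c i j)"
    by (rule sum.cong[OF refl], rule sum.cong[OF refl], rule sum.swap)
  also have "\<dots> = (\<Sum>i\<in>C. \<Sum>j\<in>D. \<Sum>r\<in>A. \<Sum>c\<in>B. f r c i j)"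
    by (rule sum.cong[OF refl], rule sum.swap)
  finally show ?thesis .
qed

lemma usv_entry: "(U ** diag_mat d ** transpose V) $ r $ c = (\<Sum>i\<in>UNIV. U$r$i * d$i * V$c$i)"
proof -
  have "(U ** diag_mat d) $ r $ k = U$r$k * d$k" for k
    by (simp add: matrix_matrix_mult_def diag_mat_def if_distrib cong: if_cong)
  then show ?thesis by (simp add: matrix_matrix_mult_def transpose_def)
qed

lemma frob_usv: "frob (U ** diag_mat d ** transpose V) (W ** diag_mat e ** transpose Z) =
  (\<Sum>i\<in>UNIV. \<Sum>j\<in>UNIV. d$i * e$j * (\<Sum>r\<in>UNIV. U$r$i * W$r$j) * (\<Sum>c\<in>UNIV. V$c$i * Z$c$j))"
proof -
  have "frob (U ** diag_mat d ** transpose V) (W ** diag_mat e ** transpose Z) =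
    (\<Sum>r\<in>UNIV. \<Sum>c\<in>UNIV. \<Sum>i\<in>UNIV. \<Sum>j\<in>UNIV. (U$r$i * d$i * V$c$i) * (W$r$j * e$j * Z$c$j))"
    by (simp add: frob_def usv_entry sum_product)
  also have "\<dots> = (\<Sum>i\<in>UNIV. \<Sum>j\<in>UNIV. \<Sum>r\<in>UNIV. \<Sum>c\<in>UNIV. (U$r$i * d$i * V$c$i) * (W$r$j * e$j * Z$c$j))"
    by (rule swap4)
  also have "\<dots> = (\<Sum>i\<in>UNIV. \<Sum>j\<in>UNIV. d$i * e$j * (\<Sum>r\<in>UNIV. U$r$i * W$r$j) * (\<Sum>c\<in>UNIV. V$c$i * Z$c$j))"
    by (simp add: sum_product sum_distrib_left mult_ac)
  finally show ?thesis .
qed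

lemma frob_diff_left: "frob (X - Y) Z = frob X Z - frob Y Z"
  by (simp add: frob_def sum_subtractf algebra_simps)
lemma frob_diff_right: "frob X (Y - Z) = frob X Y - frob X Z"
  by (simp add: frob_def sum_subtractf algebra_simps)
lemma frob_comm: "frob X Y = frob Y X"
  by (simp add: frob_def mult.commute)

lemma orth_entry_sums:
  fixes U W :: "real^'n^'n"
  assumes "orthogonal_matrix U" "orthogonal_matrix W"
  shows "(\<Sum>j\<in>UNIV. (\<Sum>r\<in>UNIV. U$r$i * W$r$j)^2) = 1"
    and "(\<Sum>i\<in>UNIV. (\<Sum>r\<in>UNIV. U$r$i * W$r$j)^2) = 1"
proof -
  let ?P = "transpose U ** W"
  have P: "?P $ i $ j = (\<Sum>r\<in>UNIV. U$r$i * W$r$j)" for i j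
    by (simp add: matrix_matrix_mult_def transpose_def)
  have o: "orthogonal_matrix ?P" using assms by (simp add: orthogonal_matrix_mul)
  then have "norm (row i ?P) = 1" "norm (column j ?P) = 1"
    using orthogonal_matrix_orthonormal_rows orthogonal_matrix_orthonormal_columns by blast+
  then have "row i ?P \<bullet> row i ?P = 1" "column j ?P \<bullet> column j ?P = 1"
    by (simp_all add: norm_eq_1)
  then show "(\<Sum>j\<in>UNIV. (\<Sum>r\<in>UNIV. U$r$i * W$r$j)^2) = 1"
    and "(\<Sum>i\<in>UNIV. (\<Sum>r\<in>UNIV. U$r$i * W$r$j)^2) = 1"
    by (simp_all add: inner_vec_def row_def column_def P power2_eq_square)
qed

lemma frob_same:
  fixes U V :: "real^'n^'n"
  assumes "orthogonal_matrix U" "orthogonal_matrix V"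
  shows "frob (U ** diag_mat d ** transpose V) (U ** diag_mat e ** transpose V) = (\<Sum>i\<in>UNIV. d$i * e$i)"
proof -
  have U: "(\<Sum>r\<in>UNIV. U$r$i * U$r$j) = (if i = j then 1 else 0)" for i j
  proof -
    have "(transpose U ** U) $ i $ j = mat 1 $ i $ j" using assms(1) by (simp add: orthogonal_matrix_def)
    then show ?thesis by (simp add: matrix_matrix_mult_def transpose_def mat_def)
  qed
  have V: "(\<Sum>r\<in>UNIV. V$r$i * V$r$j) = (if i = j then 1 else 0)" for i j
  proof -
    have "(transpose V ** V) $ i $ j = mat 1 $ i $ j" using assms(2) by (simp add: orthogonal_matrix_def)
    then show ?thesis by (simp add: matrix_matrix_mult_def transpose_def mat_def)
  qed
  have "frob (U ** diag_mat d ** transpose V) (U ** diag_mat e ** transpose V) =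
     (\<Sum>i\<in>UNIV. \<Sum>j\<in>UNIV. if j = i then d$i * e$i else 0)"
    unfolding frob_usv U V by (rule sum.cong[OF refl], rule sum.cong[OF refl]) simp
  also have "\<dots> = (\<Sum>i\<in>UNIV. d$i * e$i)" by simp
  finally show ?thesis .
qed

lemma term_nonneg:
  fixes a b Fa Gb P Q :: real
  assumes "0\<le>a" "0\<le>b" "0\<le>Fa" "0\<le>Gb" "0 \<le> (Fa-Gb)*(a-b)"
  shows "0 \<le> (Fa*a + Gb*b)*((P^2+Q^2)/2) - (Fa*b + a*Gb)*(P*Q)"
proof -
  have m: "P*Q \<le> (P^2+Q^2)/2" using sum_squares_ge_zero[of "P-Q" 0]
    by (simp add: power2_eq_square algebra_simps)
  have c: "0 \<le> Fa*b + a*Gb" using assms by simp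
  have "(Fa*b + a*Gb)*(P*Q) \<le> (Fa*b + a*Gb)*((P^2+Q^2)/2)" using mult_left_mono[OF m c] .
  moreover have "0 \<le> ((Fa-Gb)*(a-b))*((P^2+Q^2)/2)" using assms(5) by simp
  ultimately show ?thesis by (simp add: algebra_simps)
qed

lemma main_ineq:
  fixes U V W Z :: "real^'n^'n" and h k F G :: "real^'n"
  assumes oU: "orthogonal_matrix U" and oV: "orthogonal_matrix V"
    and oW: "orthogonal_matrix W" and oZ: "orthogonal_matrix Z"
    and hk: "\<And>i j. 0 \<le> F$i \<and> 0 \<le> G$j \<and> 0 \<le> h$i \<and> 0 \<le> k$j \<and> 0 \<le> (F$i - G$j)*(h$i - k$j)"
  shows "frob (U ** diag_mat F ** transpose V - W ** diag_mat G ** transpose Z)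
               (U ** diag_mat h ** transpose V - W ** diag_mat k ** transpose Z) \<ge> 0"
proof -
  define P where "P i j = (\<Sum>r\<in>UNIV. U$r$i * W$r$j)" for i j
  define Q where "Q i j = (\<Sum>r\<in>UNIV. V$r$i * Z$r$j)" for i j
  define m where "m i j = ((P i j)^2 + (Q i j)^2)/2" for i j
  have mrow: "(\<Sum>j\<in>UNIV. m i j) = 1" for i
    using orth_entry_sums(1)[OF oU oW, of i] orth_entry_sums(1)[OF oV oZ, of i]
    by (simp add: m_def P_def Q_def sum.distrib flip: sum_divide_distrib)
  have mcol: "(\<Sum>i\<in>UNIV. m i j) = 1" for j
    using orth_entry_sums(2)[OF oU oW, of j] orth_entry_sums(2)[OF oV oZ, of j]
    by (simp add: m_def P_def Q_def sum.distrib flip: sum_divide_distrib)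
  let ?X = "U ** diag_mat F ** transpose V" and ?Y = "W ** diag_mat G ** transpose Z"
  let ?A = "U ** diag_mat h ** transpose V" and ?C = "W ** diag_mat k ** transpose Z"
  have e1: "frob ?X ?A = (\<Sum>i\<in>UNIV. \<Sum>j\<in>UNIV. F$i * h$i * m i j)"
    by (simp add: frob_same[OF oU oV] mrow flip: sum_distrib_left)
  have e2: "frob ?Y ?C = (\<Sum>i\<in>UNIV. \<Sum>j\<in>UNIV. G$j * k$j * m i j)"
    apply (subst sum.swap)
    by (simp add: frob_same[OF oW oZ] mcol flip: sum_distrib_left)
  have e3: "frob ?X ?C = (\<Sum>i\<in>UNIV. \<Sum>j\<in>UNIV. F$i * k$j * (P i j * Q i j))"
    by (simp add: frob_usv P_def Q_def mult.assoc)
  have e4: "frob ?Y ?A = (\<Sum>i\<in>UNIV. \<Sum>j\<in>UNIV. h$i * G$j * (P i j * Q i j))"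
    unfolding frob_comm[of ?Y ?A] by (simp add: frob_usv P_def Q_def mult.assoc)
  have "frob (?X - ?Y) (?A - ?C) = frob ?X ?A + frob ?Y ?C - frob ?X ?C - frob ?Y ?A"
    by (simp add: frob_diff_left frob_diff_right)
  also have "\<dots> = (\<Sum>i\<in>UNIV. \<Sum>j\<in>UNIV. (F$i * h$i + G$j * k$j) * m i j - (F$i * k$j + h$i * G$j) * (P i j * Q i j))"
    unfolding e1 e2 e3 e4 by (simp add: sum.distrib sum_subtractf algebra_simps)
  also have "\<dots> \<ge> 0"
  proof (intro sum_nonneg)
    fix i j
    show "0 \<le> (F$i * h$i + G$j * k$j) * m i j - (F$i * k$j + h$i * G$j) * (P i j * Q i j)"
      unfolding m_def using hk[of i j] by (intro term_nonneg) auto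
  qed
  finally show ?thesis .
qed



lemma sym_inner:
  fixes M :: "real^'n^'n"
  assumes "transpose M = M"
  shows "x \<bullet> (M *v y) = (M *v x) \<bullet> y"
proof -
  have "x v* M = M *v x" by (metis assms vector_transpose_matrix)
  then show ?thesis by (metis dot_lmul_matrix)
qed

lemma quad_zero:
  fixes a b :: real
  assumes "\<And>t. 2*t*a + t^2*b \<le> 0"
  shows "a = 0"
proof -
  define c where "c = \<bar>b\<bar> + 1"
  have c: "c > 0" "c \<ge> 1" by (auto simp: c_def)
  have "2*(a/c)*a + (a/c)^2*b \<le> 0" using assms .
  moreover have "2*(a/c)*a = (a/c)^2 * (2*c)" using c by (simp add: field_simps power2_eq_square)
  ultimately have "(a/c)^2 * (2*c + b) \<le> 0" by (simp add: algebra_simps)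
  moreover have "2*c + b > 0" unfolding c_def by (cases "b \<ge> 0") simp_all
  ultimately have "(a/c)^2 \<le> 0" by (simp add: mult_le_0_iff)
  then have "a/c = 0" by simp
  then have "a = 0" using c by simp
  then show ?thesis by simp
qed

lemma spectral_subspace:
  fixes M :: "real^'n^'n"
  assumes sym: "transpose M = M"
  shows "subspace S \<Longrightarrow> (\<forall>x\<in>S. M *v x \<in> S) \<Longrightarrow>
    \<exists>B. B \<subseteq> S \<and> pairwise orthogonal B \<and> (\<forall>x\<in>B. norm x = 1 \<and> (\<exists>l. M *v x = l *\<^sub>R x)) \<and> span B = S"
proof (induction "dim S" arbitrary: S rule: less_induct)
  case less
  note S = less.prems(1) and inv = less.prems(2)
  show ?case
  proof (cases "S = {0}")
    case True
    then show ?thesis by (intro exI[of _ "{}"]) auto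
  next
    case False
    let ?q = "\<lambda>x. x \<bullet> (M *v x)"
    let ?K = "S \<inter> sphere 0 1"
    obtain x0 where x0: "x0 \<in> S" "x0 \<noteq> 0" using False subspace_0[OF S] by blast
    have "x0 /\<^sub>R norm x0 \<in> ?K" using x0 S by (auto simp: subspace_scale)
    then have Kne: "?K \<noteq> {}" by blast
    have Kc: "compact ?K" using S by (intro closed_Int_compact closed_subspace) auto
    have "continuous_on ?K ?q" by (intro continuous_intros)
    then obtain u where u: "u \<in> ?K" and umax: "\<And>y. y \<in> ?K \<Longrightarrow> ?q y \<le> ?q u"
      using continuous_attains_sup[OF Kc Kne] by blast
    define l where "l = ?q u"
    have uS: "u \<in> S" and un: "norm u = 1" using u by auto
    have uu: "u \<bullet> u = 1" using un by (simp add: norm_eq_1)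
    have bound: "?q y \<le> l * (y \<bullet> y)" if "y \<in> S" for y
    proof (cases "y = 0")
      case True then show ?thesis by simp
    next
      case False
      have "y /\<^sub>R norm y \<in> ?K" using that S False by (auto simp: subspace_scale)
      then have "?q (y /\<^sub>R norm y) \<le> l" using umax l_def by blast
      then have "?q y / (norm y)^2 \<le> l"
        by (simp add: matrix_vector_mult_scaleR power2_eq_square divide_inverse mult_ac)
      then have "?q y \<le> l * (norm y)^2" using False by (simp add: divide_le_eq)
      then show ?thesis by (simp add: power2_norm_eq_inner)
    qed
    define w where "w = M *v u - l *\<^sub>R u"
    have wS: "w \<in> S" unfolding w_def using inv uS S by (simp add: subspace_diff subspace_scale)
    have "w \<bullet> u = (M *v u) \<bullet> u - l * (u \<bullet> u)" by (simp add: w_def inner_diff_left)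
    also have "\<dots> = 0" using uu by (simp add: l_def inner_commute)
    finally have wu: "w \<bullet> u = 0" .
    have symw: "u \<bullet> (M *v w) = w \<bullet> (M *v u)"
      using sym_inner[OF sym, of u w] by (simp add: inner_commute)
    have "2*t*(w \<bullet> (M *v u)) + t^2*(?q w - l*(w \<bullet> w)) \<le> 0" for t
    proof -
      have h1: "?q (u + t *\<^sub>R w) \<le> l * ((u + t *\<^sub>R w) \<bullet> (u + t *\<^sub>R w))"
        using bound S uS wS by (simp add: subspace_add subspace_scale)
      have h2: "?q (u + t *\<^sub>R w) = l + 2*t*(w \<bullet> (M *v u)) + t^2 * ?q w"
        using symw by (simp add: matrix_vector_right_distrib matrix_vector_mult_scaleR
            inner_add_left inner_add_right l_def power2_eq_square algebra_simps)
      have h3: "(u + t *\<^sub>R w) \<bullet> (u + t *\<^sub>R w) = 1 + t^2 * (w \<bullet> w)"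
        using uu wu by (simp add: inner_add_left inner_add_right power2_eq_square inner_commute algebra_simps)
      show ?thesis using h1 unfolding h2 h3 by (simp add: algebra_simps)
    qed
    then have a0: "w \<bullet> (M *v u) = 0" by (rule quad_zero)
    have "w \<bullet> w = w \<bullet> (M *v u) - l * (w \<bullet> u)"
      by (metis w_def inner_diff_right inner_scaleR_right)
    then have "w \<bullet> w = 0" using a0 wu by simp
    then have Mu: "M *v u = l *\<^sub>R u" unfolding w_def by simp
    define S' where "S' = S \<inter> {x. u \<bullet> x = 0}"
    have S'sub: "subspace S'" unfolding S'_def
      using S subspace_hyperplane[of u] by (metis subspace_inter)
    have S'inv: "\<forall>x\<in>S'. M *v x \<in> S'"
    proof
      fix x assume x: "x \<in> S'"
      have "u \<bullet> (M *v x) = (M *v u) \<bullet> x" by (rule sym_inner[OF sym])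
      also have "\<dots> = 0" using x by (simp add: Mu S'_def)
      finally show "M *v x \<in> S'" using x inv by (simp add: S'_def)
    qed
    have "u \<notin> S'" using uu by (simp add: S'_def)
    then have "S' \<subset> S" using uS unfolding S'_def by blast
    moreover have "span S' = S'" "span S = S" using S S'sub by simp_all
    ultimately have "dim S' < dim S" by (metis dim_psubset)
    from less.hyps[OF this S'sub S'inv] obtain B' where B': "B' \<subseteq> S'" "pairwise orthogonal B'"
      "\<forall>x\<in>B'. norm x = 1 \<and> (\<exists>l. M *v x = l *\<^sub>R x)" "span B' = S'" by blast
    show ?thesis
    proof (intro exI[of _ "insert u B'"] conjI)
      show "insert u B' \<subseteq> S" using B'(1) uS by (auto simp: S'_def)
      show "pairwise orthogonal (insert u B')"
        using B'(1,2) by (intro pairwise_orthogonal_insert) (auto simp: S'_def orthogonal_def)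
      show "\<forall>x\<in>insert u B'. norm x = 1 \<and> (\<exists>l. M *v x = l *\<^sub>R x)" using B'(3) un Mu by blast
      show "span (insert u B') = S"
      proof
        show "span (insert u B') \<subseteq> S" using B'(1) uS S by (intro span_minimal) (auto simp: S'_def)
        show "S \<subseteq> span (insert u B')"
        proof
          fix x assume x: "x \<in> S"
          have "x - (u \<bullet> x) *\<^sub>R u \<in> S'" using x uS S uu
            by (simp add: S'_def subspace_diff subspace_scale inner_diff_right)
          then show "x \<in> span (insert u B')" using B'(4) span_breakdown_eq by blast
        qed
      qed
    qed
  qed
qed



lemma column_of_fun: "column c (\<chi> r c. g c $ r) = g c"
  by (simp add: column_def vec_eq_iff)

lemma orth_of_cols:
  fixes g :: "'n \<Rightarrow> real^'n"
  assumes "\<And>c. norm (g c) = 1" "\<And>c d. c \<noteq> d \<Longrightarrow> orthogonal (g c) (g d)"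
  shows "orthogonal_matrix (\<chi> r c. g c $ r)"
  using assms by (simp add: orthogonal_matrix_orthonormal_columns column_of_fun)

lemma card_orth_basis:
  fixes B :: "(real^'n) set"
  assumes "pairwise orthogonal B" "\<And>x. x \<in> B \<Longrightarrow> norm x = 1" "span B = UNIV"
  shows "finite B" "card B = CARD('n)"
proof -
  have "0 \<notin> B" using assms(2) by force
  then have ind: "independent B" using assms(1) pairwise_orthogonal_independent by blast
  then show "finite B" using independent_imp_finite by blast
  have "card B = dim (UNIV :: (real^'n) set)"
    using ind assms(3) by (metis dim_eq_card_independent dim_span)
  then show "card B = CARD('n)" by simp
qed

lemma extend_orth:
  fixes f :: "'n \<Rightarrow> real^'n"
  assumes orth: "\<And>i j. i \<noteq> j \<Longrightarrow> f i \<bullet> f j = 0"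
    and nrm: "\<And>i. f i \<noteq> 0 \<Longrightarrow> norm (f i) = 1"
  shows "\<exists>U. orthogonal_matrix U \<and> (\<forall>i. f i \<noteq> 0 \<longrightarrow> column i U = f i)"
proof -
  define I where "I = {i. f i \<noteq> 0}"
  define T where "T = f ` I"
  have injf: "inj_on f I"
  proof
    fix i j assume "i \<in> I" "j \<in> I" "f i = f j"
    then show "i = j" using orth[of i j] nrm[of i] by (auto simp: I_def norm_eq_1)
  qed
  have Tpo: "pairwise orthogonal T" unfolding pairwise_def orthogonal_def
  proof (intro ballI impI)
    fix x y assume "x \<in> T" "y \<in> T" "x \<noteq> y"
    then obtain i j where "x = f i" "y = f j" "i \<noteq> j" unfolding T_def by blast
    then show "x \<bullet> y = 0" using orth by simp
  qed
  have Tn: "\<And>x. x \<in> T \<Longrightarrow> norm x = 1" using nrm by (auto simp: T_def I_def)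
  have "0 \<notin> T" using Tn by force
  then have Tind: "independent T" using Tpo pairwise_orthogonal_independent by blast
  have cardT: "card T = card I" unfolding T_def using injf by (simp add: card_image)
  define N where "N = {y. \<forall>x \<in> span T. orthogonal x y}"
  have Nsub: "subspace N" unfolding N_def
    using subspace_orthogonal_comp[of "span T"] by (simp add: orthogonal_comp_def)
  have "dim {y \<in> UNIV. \<forall>x \<in> span T. orthogonal x y} + dim (span T) = dim (UNIV :: (real^'n) set)"
    by (rule dim_subspace_orthogonal_to_vectors) auto
  then have dimN: "dim N + card T = CARD('n)"
    using Tind by (simp add: N_def dim_span dim_eq_card_independent)
  obtain R where R: "R \<subseteq> N" "pairwise orthogonal R" "\<And>x. x \<in> R \<Longrightarrow> norm x = 1"
      "independent R" "card R = dim N"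
    using orthonormal_basis_subspace[OF Nsub] by metis
  have finR: "finite R" using R(4) independent_imp_finite by blast
  have cardR: "card R = card (- I)"
  proof -
    have "card I + card (- I) = CARD('n)"
      using card_Un_disjoint[of I "-I"] by (simp flip: card_UNIV)
    then show ?thesis using dimN cardT R(5) by simp
  qed
  obtain g where g: "bij_betw g (- I) R"
    using finite_same_card_bij[of "- I" R] finR cardR by auto
  define h where "h c = (if c \<in> I then f c else g c)" for c
  have RT: "orthogonal t r" if "t \<in> T" "r \<in> R" for t r
    using that R(1) span_base[of t T] by (auto simp: N_def)
  have hn: "norm (h c) = 1" for c
    using Tn R(3) g by (auto simp: h_def T_def bij_betw_def)
  have ho: "orthogonal (h c) (h d)" if "c \<noteq> d" for c d
  proof (cases "c \<in> I")
    case cI: True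
    show ?thesis
    proof (cases "d \<in> I")
      case True then show ?thesis using cI orth[OF that] by (simp add: h_def orthogonal_def)
    next
      case False
      then have "g d \<in> R" using g by (auto simp: bij_betw_def)
      then show ?thesis using cI False RT by (auto simp: h_def T_def)
    qed
  next
    case cI: False
    show ?thesis
    proof (cases "d \<in> I")
      case True
      then have "g c \<in> R" using g cI by (auto simp: bij_betw_def)
      then show ?thesis using cI True RT by (auto simp: h_def T_def orthogonal_commute)
    next
      case False
      then have "g c \<in> R" "g d \<in> R" "g c \<noteq> g d" using g cI that
        by (auto simp: bij_betw_def inj_on_def)
      then show ?thesis using cI False R(2) by (auto simp: h_def pairwise_def)
    qed
  qed
  have "orthogonal_matrix (\<chi> r c. h c $ r)" using hn ho by (rule orth_of_cols)
  moreover have "\<forall>i. f i \<noteq> 0 \<longrightarrow> column i (\<chi> r c. h c $ r) = f i"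
    by (simp add: column_of_fun h_def I_def)
  ultimately show ?thesis by blast
qed



lemma Av_inner: "(A *v x) \<bullet> z = x \<bullet> (transpose A *v (z::real^'m))" for A :: "real^'n^'m"
  by (metis dot_lmul_matrix vector_transpose_matrix)

lemma svd_exists:
  fixes A :: "real^'n^'n"
  shows "\<exists>U \<sigma> V. is_svd A U \<sigma> V"
proof -
  define M where "M = transpose A ** A"
  have sym: "transpose M = M" by (simp add: M_def matrix_transpose_mul)
  obtain B where B: "pairwise orthogonal B" "\<forall>x\<in>B. norm x = 1 \<and> (\<exists>l. M *v x = l *\<^sub>R x)" "span B = UNIV"
    using spectral_subspace[OF sym, of UNIV] by auto
  have Bn: "\<And>x. x \<in> B \<Longrightarrow> norm x = 1" using B(2) by blast
  have finB: "finite B" and cardB: "card B = CARD('n)" using card_orth_basis[OF B(1) Bn B(3)] by auto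
  obtain e where e: "bij_betw e (UNIV::'n set) B"
    using finite_same_card_bij[of "UNIV::'n set" B] finB cardB by auto
  have eB: "e c \<in> B" for c using e by (auto simp: bij_betw_def)
  have einj: "c \<noteq> d \<Longrightarrow> e c \<noteq> e d" for c d using e by (auto simp: bij_betw_def inj_on_def)
  have en: "norm (e c) = 1" for c using Bn eB by blast
  have eo: "c \<noteq> d \<Longrightarrow> e c \<bullet> e d = 0" for c d
    using B(1) eB einj unfolding pairwise_def orthogonal_def by blast
  have "\<forall>c. \<exists>l. M *v e c = l *\<^sub>R e c" using B(2) eB by blast
  then obtain lam where lam: "\<And>c. M *v e c = lam c *\<^sub>R e c" by metis
  define V where "V = (\<chi> r c. e c $ r)"
  have oV: "orthogonal_matrix V" unfolding V_def
    using en eo by (intro orth_of_cols) (auto simp: orthogonal_def)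
  have colV: "column c V = e c" for c by (simp add: V_def column_of_fun)
  define \<sigma> where "\<sigma> = (\<chi> c. norm (A *v e c))"
  have Ao: "c \<noteq> d \<Longrightarrow> (A *v e c) \<bullet> (A *v e d) = 0" for c d
    using eo[of c d] by (simp add: Av_inner matrix_vector_mul_assoc M_def[symmetric] lam)
  define f where "f c = (if \<sigma>$c = 0 then 0 else (1 / \<sigma>$c) *\<^sub>R (A *v e c))" for c
  have fo: "i \<noteq> j \<Longrightarrow> f i \<bullet> f j = 0" for i j using Ao[of i j] by (simp add: f_def)
  have fn: "f i \<noteq> 0 \<Longrightarrow> norm (f i) = 1" for i
  proof -
    assume "f i \<noteq> 0"
    then have ne: "\<sigma>$i \<noteq> 0" by (auto simp: f_def)
    have s: "\<sigma>$i = norm (A *v e i)" by (simp add: \<sigma>_def)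
    have "norm (f i) = \<bar>1 / \<sigma>$i\<bar> * norm (A *v e i)" using ne by (simp add: f_def)
    also have "\<dots> = 1" using ne unfolding s by simp
    finally show ?thesis .
  qed
  obtain U where oU: "orthogonal_matrix U" and colU: "\<And>i. f i \<noteq> 0 \<Longrightarrow> column i U = f i"
    using extend_orth[of f] fo fn by blast
  have cols: "A *v e c = \<sigma>$c *\<^sub>R column c U" for c
  proof (cases "\<sigma>$c = 0")
    case True then show ?thesis by (simp add: \<sigma>_def)
  next
    case False
    then have "f c \<noteq> 0" by (auto simp: f_def \<sigma>_def)
    then show ?thesis using colU[of c] False by (simp add: f_def)
  qed
  have AV: "A ** V = U ** diag_mat \<sigma>"
  proof -
    have "(A ** V) $ r $ c = (U ** diag_mat \<sigma>) $ r $ c" for r c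
    proof -
      have "(A ** V) $ r $ c = (A *v e c) $ r"
        by (simp add: matrix_matrix_mult_def matrix_vector_mult_def V_def)
      also have "\<dots> = \<sigma>$c * U $ r $ c" by (simp add: cols column_def)
      also have "\<dots> = (U ** diag_mat \<sigma>) $ r $ c"
        by (simp add: matrix_matrix_mult_def diag_mat_def if_distrib cong: if_cong)
      finally show ?thesis .
    qed
    then show ?thesis by (simp add: vec_eq_iff)
  qed
  have "A = A ** (V ** transpose V)" using oV by (simp add: orthogonal_matrix_def)
  also have "\<dots> = U ** diag_mat \<sigma> ** transpose V" by (simp add: matrix_mul_assoc AV)
  finally have "A = U ** diag_mat \<sigma> ** transpose V" .
  moreover have "\<forall>i. \<sigma>$i \<ge> 0" by (simp add: \<sigma>_def)
  ultimately show ?thesis using oU oV unfolding is_svd_def by blast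
qed


lemma S_map_svd:
  fixes A :: "real^'n^'n"
  shows "\<exists>U \<sigma> V. is_svd A U \<sigma> V \<and> S_map s A = U ** diag_mat (\<chi> i. (\<sigma> $ i) powr (2 * s + 1)) ** transpose V"
proof -
  obtain U \<sigma> V where "is_svd A U \<sigma> V" using svd_exists by blast
  then have "\<exists>B. \<exists>U \<sigma> V. is_svd A U \<sigma> V \<and> B = U ** diag_mat (\<chi> i. (\<sigma> $ i) powr (2 * s + 1)) ** transpose V"
    by blast
  from someI_ex[OF this] show ?thesis unfolding S_map_def by metis
qed

lemma powr_mono_prod:
  fixes x y p :: real
  assumes "0 \<le> x" "0 \<le> y" "0 \<le> p"
  shows "0 \<le> (x powr p - y powr p) * (x - y)"
proof (cases "x \<le> y")
  case True
  then have "x powr p \<le> y powr p" using assms by (intro powr_mono2) auto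
  then show ?thesis using True by (simp add: mult_nonpos_nonpos)
next
  case False
  then have "y powr p \<le> x powr p" using assms by (intro powr_mono2) auto
  then show ?thesis using False by simp
qed

theorem mainTheorem4:
  fixes A C :: "real ^ 'n ^ 'n" and s :: real
  assumes "s > - 1/2"
  shows "frob (S_map s A - S_map s C) (A - C) \<ge> 0"
proof -
  obtain U \<sigma> V where a: "is_svd A U \<sigma> V" and sa: "S_map s A = U ** diag_mat (\<chi> i. (\<sigma> $ i) powr (2 * s + 1)) ** transpose V"
    using S_map_svd by blast
  obtain W \<kappa> Z where c: "is_svd C W \<kappa> Z" and sc: "S_map s C = W ** diag_mat (\<chi> i. (\<kappa> $ i) powr (2 * s + 1)) ** transpose Z"
    using S_map_svd by blast
  have p: "0 \<le> 2 * s + 1" using assms by simp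
  from a have oU: "orthogonal_matrix U" and oV: "orthogonal_matrix V" and sg: "\<forall>i. 0 \<le> \<sigma> $ i"
    and Ae: "A = U ** diag_mat \<sigma> ** transpose V" unfolding is_svd_def by auto
  from c have oW: "orthogonal_matrix W" and oZ: "orthogonal_matrix Z" and kg: "\<forall>i. 0 \<le> \<kappa> $ i"
    and Ce: "C = W ** diag_mat \<kappa> ** transpose Z" unfolding is_svd_def by auto
  have "frob (U ** diag_mat (\<chi> i. (\<sigma> $ i) powr (2 * s + 1)) ** transpose V - W ** diag_mat (\<chi> i. (\<kappa> $ i) powr (2 * s + 1)) ** transpose Z)
     (U ** diag_mat \<sigma> ** transpose V - W ** diag_mat \<kappa> ** transpose Z) \<ge> 0"
  proof (rule main_ineq[OF oU oV oW oZ])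
    fix i j
    show "0 \<le> (\<chi> i. (\<sigma> $ i) powr (2 * s + 1)) $ i \<and> 0 \<le> (\<chi> i. (\<kappa> $ i) powr (2 * s + 1)) $ j \<and>
      0 \<le> \<sigma> $ i \<and> 0 \<le> \<kappa> $ j \<and>
      0 \<le> ((\<chi> i. (\<sigma> $ i) powr (2 * s + 1)) $ i - (\<chi> i. (\<kappa> $ i) powr (2 * s + 1)) $ j) * (\<sigma> $ i - \<kappa> $ j)"
      using sg kg p by (simp add: powr_mono_prod)
  qed
  then show ?thesis unfolding sa sc by (simp only: Ae[symmetric] Ce[symmetric])
qed

end
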